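(* Let $\mathcal F,\mathcal G,\mathcal H$ be exact categories and $\gamma\colon\mathcal F\to\mathcal G$, $\eta\colon\mathcal G\to\mathcal H$ exact functors. (a) If $\eta\gamma$ reflects admissible epimorphisms (resp. admissible monomorphisms, resp. exact sequences), then so does $\gamma$. If $\eta\gamma$ satisfies ($*'$), then so does $\eta$. (b) If $\gamma$ satisfies ($*'$) and $\eta\gamma$ satisfies (i$'$), then $\eta$ satisfies (i$'$). (c) If $\gamma$ satisfies ($*'$) and $\eta\gamma$ satisfies ($**'$), then $\eta$ satisfies ($**'$). (d) If $\gamma$ satisfies ($*'$), and $\eta\gamma$ satisfies (i$'$), (ii$'$), ($*'$), ($**'$) and reflects admissible epimorphisms, then $\eta$ satisfies (ii$'$).
   Context: Exact categories in Quillen's sense. For an exact functor $\theta\colon\mathcal A\to\mathcal B$: (i$'$) for any $X\in\mathcal A$ and any admissible epimorphism $T\to\theta(X)$ in $\mathcal B$ there exist an admissible epimorphism $Z\to X$ in $\mathcal A$ and a morphism $\theta(Z)\to T$ such that $\theta(Z)\to T\to\theta(X)$ equals $\theta(Z\to X)$; (ii$'$) for any $X,Y\in\mathcal A$ and any morphism $g\colon\theta(X)\to\theta(Y)$ there exist an admissible epimorphism $p\colon X'\to X$ and a morphism $h\colon X'\to Y$ in $\mathcal A$ with $g\circ\theta(p)=\theta(h)$; ($*'$) for any $T\in\mathcal B$ there exist $U\in\mathcal A$ and an admissible epimorphism $\theta(U)\to T$; ($**'$) for any $X\in\mathcal A$ and any morphism $g\colon\theta(X)\to T$ in $\mathcal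 B$ there exist an admissible epimorphism $p\colon X'\to X$ in $\mathcal A$, a morphism $h\colon X'\to S$ in $\mathcal A$ and an admissible epimorphism $e\colon\theta(S)\to T$ in $\mathcal B$ with $g\circ\theta(p)=e\circ\theta(h)$. *)

theory Defs
  imports Main
begin

text \<open>A (small) category is given by a set of objects, a set of arrows, domain,
codomain, identities and composition (cCmp C g f = g o f).  An exact category
additionally carries the abelian group structure on hom-sets (cPlus, cZero, cNeg)
and the class cConfl of conflations (short exact sequences), each given as a pair
(i, d) of the admissible monomorphism i and the admissible epimorphism d.\<close>

record ('o, 'm) excat =
  cOb    :: "'o set"
  cAr    :: "'m set"
  cDom   :: "'m \<Rightarrow> 'o"
  cCod   :: "'m \<Rightarrow> 'o"
  cId    :: "'o \<Rightarrow> 'm"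
  cCmp   :: "'m \<Rightarrow> 'm \<Rightarrow> 'm"
  cPlus  :: "'m \<Rightarrow> 'm \<Rightarrow> 'm"
  cZero  :: "'o \<Rightarrow> 'o \<Rightarrow> 'm"
  cNeg   :: "'m \<Rightarrow> 'm"
  cConfl :: "('m \<times> 'm) set"

definition hom :: "('o, 'm) excat \<Rightarrow> 'o \<Rightarrow> 'o \<Rightarrow> 'm set" where
  "hom C X Y = {f \<in> cAr C. cDom C f = X \<and> cCod C f = Y}"

definition is_category :: "('o, 'm) excat \<Rightarrow> bool" where
  "is_category C \<longleftrightarrow>
     (\<forall>f\<in>cAr C. cDom C f \<in> cOb C \<and> cCod C f \<in> cOb C) \<and>
     (\<forall>X\<in>cOb C. cId C X \<in> hom C X X) \<and>
     (\<forall>X Y Z f g. f \<in> hom C X Y \<longrightarrow> g \<in> hom C Y Z \<longrightarrow> cCmp C g f \<in> hom C X Z) \<and>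
     (\<forall>X Y f. f \<in> hom C X Y \<longrightarrow> cCmp C (cId C Y) f = f \<and> cCmp C f (cId C X) = f) \<and>
     (\<forall>W X Y Z f g h. f \<in> hom C W X \<longrightarrow> g \<in> hom C X Y \<longrightarrow> h \<in> hom C Y Z \<longrightarrow>
        cCmp C h (cCmp C g f) = cCmp C (cCmp C h g) f)"

definition preadditive :: "('o, 'm) excat \<Rightarrow> bool" where
  "preadditive C \<longleftrightarrow> is_category C \<and>
     (\<forall>X\<in>cOb C. \<forall>Y\<in>cOb C.
        cZero C X Y \<in> hom C X Y \<and>
        (\<forall>f\<in>hom C X Y. cNeg C f \<in> hom C X Y \<and> cPlus C f (cZero C X Y) = f \<and>
                         cPlus C f (cNeg C f) = cZero C X Y) \<and>
        (\<forall>f\<in>hom C X Y. \<forall>g\<in>hom C X Y. cPlus C f g \<in> hom C X Y \<and> cPlus C f g = cPlus C g f) \<and>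
        (\<forall>f\<in>hom C X Y. \<forall>g\<in>hom C X Y. \<forall>h\<in>hom C X Y.
            cPlus C (cPlus C f g) h = cPlus C f (cPlus C g h))) \<and>
     (\<forall>X Y Z f f' g. f \<in> hom C X Y \<longrightarrow> f' \<in> hom C X Y \<longrightarrow> g \<in> hom C Y Z \<longrightarrow>
        cCmp C g (cPlus C f f') = cPlus C (cCmp C g f) (cCmp C g f')) \<and>
     (\<forall>X Y Z f g g'. f \<in> hom C X Y \<longrightarrow> g \<in> hom C Y Z \<longrightarrow> g' \<in> hom C Y Z \<longrightarrow>
        cCmp C (cPlus C g g') f = cPlus C (cCmp C g f) (cCmp C g' f))"

definition is_zero_object :: "('o, 'm) excat \<Rightarrow> 'o \<Rightarrow> bool" where
  "is_zero_object C Z \<longleftrightarrow> Z \<in> cOb C \<and> cId C Z = cZero C Z Z"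

definition is_biproduct ::
  "('o, 'm) excat \<Rightarrow> 'o \<Rightarrow> 'o \<Rightarrow> 'o \<Rightarrow> 'm \<Rightarrow> 'm \<Rightarrow> 'm \<Rightarrow> 'm \<Rightarrow> bool" where
  "is_biproduct C A B P i1 i2 p1 p2 \<longleftrightarrow>
     P \<in> cOb C \<and> i1 \<in> hom C A P \<and> i2 \<in> hom C B P \<and> p1 \<in> hom C P A \<and> p2 \<in> hom C P B \<and>
     cCmp C p1 i1 = cId C A \<and> cCmp C p2 i2 = cId C B \<and>
     cCmp C p2 i1 = cZero C A B \<and> cCmp C p1 i2 = cZero C B A \<and>
     cPlus C (cCmp C i1 p1) (cCmp C i2 p2) = cId C P"

definition additive :: "('o, 'm) excat \<Rightarrow> bool" where
  "additive C \<longleftrightarrow> preadditive C \<and> (\<exists>Z. is_zero_object C Z) \<and>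
     (\<forall>A\<in>cOb C. \<forall>B\<in>cOb C. \<exists>P i1 i2 p1 p2. is_biproduct C A B P i1 i2 p1 p2)"

definition is_kernel :: "('o, 'm) excat \<Rightarrow> 'm \<Rightarrow> 'm \<Rightarrow> bool" where
  "is_kernel C i d \<longleftrightarrow> i \<in> cAr C \<and> d \<in> cAr C \<and> cCod C i = cDom C d \<and>
     cCmp C d i = cZero C (cDom C i) (cCod C d) \<and>
     (\<forall>f\<in>cAr C. cCod C f = cDom C d \<and> cCmp C d f = cZero C (cDom C f) (cCod C d) \<longrightarrow>
        (\<exists>!u. u \<in> hom C (cDom C f) (cDom C i) \<and> cCmp C i u = f))"

definition is_cokernel :: "('o, 'm) excat \<Rightarrow> 'm \<Rightarrow> 'm \<Rightarrow> bool" where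
  "is_cokernel C d i \<longleftrightarrow> i \<in> cAr C \<and> d \<in> cAr C \<and> cCod C i = cDom C d \<and>
     cCmp C d i = cZero C (cDom C i) (cCod C d) \<and>
     (\<forall>g\<in>cAr C. cDom C g = cCod C i \<and> cCmp C g i = cZero C (cDom C i) (cCod C g) \<longrightarrow>
        (\<exists>!u. u \<in> hom C (cCod C d) (cCod C g) \<and> cCmp C u d = g))"

definition kc_pair :: "('o, 'm) excat \<Rightarrow> 'm \<Rightarrow> 'm \<Rightarrow> bool" where
  "kc_pair C i d \<longleftrightarrow> is_kernel C i d \<and> is_cokernel C d i"

definition is_iso :: "('o, 'm) excat \<Rightarrow> 'm \<Rightarrow> bool" where
  "is_iso C f \<longleftrightarrow> f \<in> cAr C \<and>
     (\<exists>g\<in>hom C (cCod C f) (cDom C f). cCmp C g f = cId C (cDom C f) \<and> cCmp C f g = cId C (cCod C f))"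

definition adm_mono :: "('o, 'm) excat \<Rightarrow> 'm \<Rightarrow> bool" where
  "adm_mono C i \<longleftrightarrow> (\<exists>d. (i, d) \<in> cConfl C)"

definition adm_epi :: "('o, 'm) excat \<Rightarrow> 'm \<Rightarrow> bool" where
  "adm_epi C d \<longleftrightarrow> (\<exists>i. (i, d) \<in> cConfl C)"

text \<open>Pushout square: i : A \<rightarrow> B, f : A \<rightarrow> A', i' : A' \<rightarrow> B', f' : B \<rightarrow> B'.\<close>
definition is_pushout :: "('o, 'm) excat \<Rightarrow> 'm \<Rightarrow> 'm \<Rightarrow> 'm \<Rightarrow> 'm \<Rightarrow> bool" where
  "is_pushout C i f i' f' \<longleftrightarrow> i \<in> cAr C \<and> f \<in> cAr C \<and> cDom C i = cDom C f \<and>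
     i' \<in> hom C (cCod C f) (cCod C i') \<and> f' \<in> hom C (cCod C i) (cCod C i') \<and>
     cCmp C i' f = cCmp C f' i \<and>
     (\<forall>g\<in>cAr C. \<forall>h\<in>cAr C. cDom C g = cCod C f \<and> cDom C h = cCod C i \<and> cCod C g = cCod C h \<and>
        cCmp C g f = cCmp C h i \<longrightarrow>
        (\<exists>!u. u \<in> hom C (cCod C i') (cCod C g) \<and> cCmp C u i' = g \<and> cCmp C u f' = h))"

text \<open>Pullback square: d : B \<rightarrow> C0, f : C0' \<rightarrow> C0, d' : B' \<rightarrow> C0', f' : B' \<rightarrow> B.\<close>
definition is_pullback :: "('o, 'm) excat \<Rightarrow> 'm \<Rightarrow> 'm \<Rightarrow> 'm \<Rightarrow> 'm \<Rightarrow> bool" where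
  "is_pullback C d f d' f' \<longleftrightarrow> d \<in> cAr C \<and> f \<in> cAr C \<and> cCod C d = cCod C f \<and>
     d' \<in> hom C (cDom C d') (cDom C f) \<and> f' \<in> hom C (cDom C d') (cDom C d) \<and>
     cCmp C d f' = cCmp C f d' \<and>
     (\<forall>g\<in>cAr C. \<forall>h\<in>cAr C. cCod C g = cDom C f \<and> cCod C h = cDom C d \<and> cDom C g = cDom C h \<and>
        cCmp C f g = cCmp C d h \<longrightarrow>
        (\<exists>!u. u \<in> hom C (cDom C g) (cDom C d') \<and> cCmp C d' u = g \<and> cCmp C f' u = h))"

text \<open>Exact category (Quillen), in the standard axiomatisation of Keller/Buehler:
an additive category with a class of kernel-cokernel pairs closed under isomorphism
satisfying [E0], [E0op], [E1], [E1op], [E2], [E2op].\<close>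
definition exact_category :: "('o, 'm) excat \<Rightarrow> bool" where
  "exact_category C \<longleftrightarrow> additive C \<and>
     (\<forall>(i, d)\<in>cConfl C. kc_pair C i d) \<and>
     (\<forall>i d i' d' a b c. (i, d) \<in> cConfl C \<and> i' \<in> cAr C \<and> d' \<in> cAr C \<and> cCod C i' = cDom C d' \<and>
        is_iso C a \<and> is_iso C b \<and> is_iso C c \<and>
        a \<in> hom C (cDom C i) (cDom C i') \<and> b \<in> hom C (cCod C i) (cCod C i') \<and>
        c \<in> hom C (cCod C d) (cCod C d') \<and>
        cCmp C b i = cCmp C i' a \<and> cCmp C c d = cCmp C d' b \<longrightarrow> (i', d') \<in> cConfl C) \<and>
     (\<forall>X\<in>cOb C. adm_mono C (cId C X)) \<and>
     (\<forall>X\<in>cOb C. adm_epi C (cId C X)) \<and>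
     (\<forall>i j. adm_mono C i \<and> adm_mono C j \<and> cCod C i = cDom C j \<longrightarrow> adm_mono C (cCmp C j i)) \<and>
     (\<forall>d e. adm_epi C d \<and> adm_epi C e \<and> cCod C d = cDom C e \<longrightarrow> adm_epi C (cCmp C e d)) \<and>
     (\<forall>i f. adm_mono C i \<and> f \<in> cAr C \<and> cDom C f = cDom C i \<longrightarrow>
        (\<exists>i' f'. is_pushout C i f i' f' \<and> adm_mono C i')) \<and>
     (\<forall>d f. adm_epi C d \<and> f \<in> cAr C \<and> cCod C f = cCod C d \<longrightarrow>
        (\<exists>d' f'. is_pullback C d f d' f' \<and> adm_epi C d'))"

definition is_functor ::
  "('o1, 'm1) excat \<Rightarrow> ('o2, 'm2) excat \<Rightarrow> ('o1 \<Rightarrow> 'o2) \<Rightarrow> ('m1 \<Rightarrow> 'm2) \<Rightarrow> bool" where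
  "is_functor A B Fo Fm \<longleftrightarrow>
     (\<forall>X\<in>cOb A. Fo X \<in> cOb B \<and> Fm (cId A X) = cId B (Fo X)) \<and>
     (\<forall>f\<in>cAr A. Fm f \<in> hom B (Fo (cDom A f)) (Fo (cCod A f))) \<and>
     (\<forall>f\<in>cAr A. \<forall>g\<in>cAr A. cCod A f = cDom A g \<longrightarrow> Fm (cCmp A g f) = cCmp B (Fm g) (Fm f))"

definition additive_functor ::
  "('o1, 'm1) excat \<Rightarrow> ('o2, 'm2) excat \<Rightarrow> ('o1 \<Rightarrow> 'o2) \<Rightarrow> ('m1 \<Rightarrow> 'm2) \<Rightarrow> bool" where
  "additive_functor A B Fo Fm \<longleftrightarrow> is_functor A B Fo Fm \<and>
     (\<forall>f\<in>cAr A. \<forall>g\<in>cAr A. cDom A f = cDom A g \<and> cCod A f = cCod A g \<longrightarrow>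
        Fm (cPlus A f g) = cPlus B (Fm f) (Fm g))"

definition exact_functor ::
  "('o1, 'm1) excat \<Rightarrow> ('o2, 'm2) excat \<Rightarrow> ('o1 \<Rightarrow> 'o2) \<Rightarrow> ('m1 \<Rightarrow> 'm2) \<Rightarrow> bool" where
  "exact_functor A B Fo Fm \<longleftrightarrow> additive_functor A B Fo Fm \<and>
     (\<forall>(i, d)\<in>cConfl A. (Fm i, Fm d) \<in> cConfl B)"

definition reflects_adm_epi ::
  "('o1, 'm1) excat \<Rightarrow> ('o2, 'm2) excat \<Rightarrow> ('m1 \<Rightarrow> 'm2) \<Rightarrow> bool" where
  "reflects_adm_epi A B Fm \<longleftrightarrow> (\<forall>f\<in>cAr A. adm_epi B (Fm f) \<longrightarrow> adm_epi A f)"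

definition reflects_adm_mono ::
  "('o1, 'm1) excat \<Rightarrow> ('o2, 'm2) excat \<Rightarrow> ('m1 \<Rightarrow> 'm2) \<Rightarrow> bool" where
  "reflects_adm_mono A B Fm \<longleftrightarrow> (\<forall>f\<in>cAr A. adm_mono B (Fm f) \<longrightarrow> adm_mono A f)"

definition reflects_exact ::
  "('o1, 'm1) excat \<Rightarrow> ('o2, 'm2) excat \<Rightarrow> ('m1 \<Rightarrow> 'm2) \<Rightarrow> bool" where
  "reflects_exact A B Fm \<longleftrightarrow>
     (\<forall>i\<in>cAr A. \<forall>d\<in>cAr A. cCod A i = cDom A d \<and> (Fm i, Fm d) \<in> cConfl B \<longrightarrow> (i, d) \<in> cConfl A)"

definition cond_i' ::
  "('o1, 'm1) excat \<Rightarrow> ('o2, 'm2) excat \<Rightarrow> ('o1 \<Rightarrow> 'o2) \<Rightarrow> ('m1 \<Rightarrow> 'm2) \<Rightarrow> bool" where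
  "cond_i' A B Fo Fm \<longleftrightarrow>
     (\<forall>X\<in>cOb A. \<forall>t. adm_epi B t \<and> cCod B t = Fo X \<longrightarrow>
        (\<exists>z u. adm_epi A z \<and> cCod A z = X \<and> u \<in> hom B (Fo (cDom A z)) (cDom B t) \<and>
               cCmp B t u = Fm z))"

definition cond_ii' ::
  "('o1, 'm1) excat \<Rightarrow> ('o2, 'm2) excat \<Rightarrow> ('o1 \<Rightarrow> 'o2) \<Rightarrow> ('m1 \<Rightarrow> 'm2) \<Rightarrow> bool" where
  "cond_ii' A B Fo Fm \<longleftrightarrow>
     (\<forall>X\<in>cOb A. \<forall>Y\<in>cOb A. \<forall>g\<in>hom B (Fo X) (Fo Y).
        (\<exists>p h. adm_epi A p \<and> cCod A p = X \<and> h \<in> hom A (cDom A p) Y \<and>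
               cCmp B g (Fm p) = Fm h))"

definition cond_star' ::
  "('o1, 'm1) excat \<Rightarrow> ('o2, 'm2) excat \<Rightarrow> ('o1 \<Rightarrow> 'o2) \<Rightarrow> ('m1 \<Rightarrow> 'm2) \<Rightarrow> bool" where
  "cond_star' A B Fo Fm \<longleftrightarrow>
     (\<forall>T\<in>cOb B. \<exists>U\<in>cOb A. \<exists>e. adm_epi B e \<and> cDom B e = Fo U \<and> cCod B e = T)"

definition cond_starstar' ::
  "('o1, 'm1) excat \<Rightarrow> ('o2, 'm2) excat \<Rightarrow> ('o1 \<Rightarrow> 'o2) \<Rightarrow> ('m1 \<Rightarrow> 'm2) \<Rightarrow> bool" where
  "cond_starstar' A B Fo Fm \<longleftrightarrow>
     (\<forall>X\<in>cOb A. \<forall>g\<in>cAr B. cDom B g = Fo X \<longrightarrow>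
        (\<exists>p h e. adm_epi A p \<and> cCod A p = X \<and> h \<in> cAr A \<and> cDom A h = cDom A p \<and>
                 adm_epi B e \<and> cDom B e = Fo (cCod A h) \<and> cCod B e = cCod B g \<and>
                 cCmp B g (Fm p) = cCmp B e (Fm h)))"

end

theory Submission
  imports Defs
begin

lemma ec_cat: "exact_category C \<Longrightarrow> is_category C"
  by (simp add: exact_category_def additive_def preadditive_def)

lemma cmp_ar:
  assumes "exact_category C" "f \<in> cAr C" "g \<in> cAr C" "cCod C f = cDom C g"
  shows "cCmp C g f \<in> cAr C \<and> cDom C (cCmp C g f) = cDom C f \<and> cCod C (cCmp C g f) = cCod C g"
proof -
  have "f \<in> hom C (cDom C f) (cCod C f)" "g \<in> hom C (cCod C f) (cCod C g)"
    using assms by (auto simp: hom_def)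
  then have "cCmp C g f \<in> hom C (cDom C f) (cCod C g)"
    using ec_cat[OF assms(1)] unfolding is_category_def by blast
  then show ?thesis by (simp add: hom_def)
qed

lemma cmp_assoc:
  assumes "exact_category C" "f \<in> cAr C" "g \<in> cAr C" "h \<in> cAr C" "cCod C f = cDom C g" "cCod C g = cDom C h"
  shows "cCmp C h (cCmp C g f) = cCmp C (cCmp C h g) f"
proof -
  have "f \<in> hom C (cDom C f) (cCod C f)" "g \<in> hom C (cCod C f) (cCod C g)" "h \<in> hom C (cCod C g) (cCod C h)"
    using assms by (auto simp: hom_def)
  then show ?thesis
    using ec_cat[OF assms(1)] unfolding is_category_def by blast
qed

lemma epi_ar: "exact_category C \<Longrightarrow> adm_epi C d \<Longrightarrow> d \<in> cAr C"
  unfolding exact_category_def adm_epi_def kc_pair_def is_kernel_def by fast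

lemma mono_ar: "exact_category C \<Longrightarrow> adm_mono C d \<Longrightarrow> d \<in> cAr C"
  unfolding exact_category_def adm_mono_def kc_pair_def is_kernel_def by fast

lemma epi_cmp: "exact_category C \<Longrightarrow> adm_epi C d \<Longrightarrow> adm_epi C e \<Longrightarrow> cCod C d = cDom C e \<Longrightarrow> adm_epi C (cCmp C e d)"
  unfolding exact_category_def by blast

lemma pb:
  assumes "exact_category C" "adm_epi C d" "f \<in> cAr C" "cCod C f = cCod C d"
  shows "\<exists>d' f'. adm_epi C d' \<and> d' \<in> cAr C \<and> cCod C d' = cDom C f \<and> f' \<in> cAr C \<and> cDom C f' = cDom C d'
     \<and> cCod C f' = cDom C d \<and> cCmp C d f' = cCmp C f d'"
proof -
  obtain d' f' where "is_pullback C d f d' f'" "adm_epi C d'"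
    using assms unfolding exact_category_def by blast
  then have "d' \<in> cAr C \<and> cCod C d' = cDom C f \<and> f' \<in> cAr C \<and> cDom C f' = cDom C d'
     \<and> cCod C f' = cDom C d \<and> cCmp C d f' = cCmp C f d'" unfolding is_pullback_def hom_def by auto
  then show ?thesis using \<open>adm_epi C d'\<close> by blast
qed

lemma fun_ar:
  assumes "exact_functor A B Fo Fm" "f \<in> cAr A"
  shows "Fm f \<in> cAr B \<and> cDom B (Fm f) = Fo (cDom A f) \<and> cCod B (Fm f) = Fo (cCod A f)"
  using assms unfolding exact_functor_def additive_functor_def is_functor_def hom_def by blast

lemma fun_ob:
  assumes "exact_functor A B Fo Fm" "X \<in> cOb A"
  shows "Fo X \<in> cOb B"
  using assms unfolding exact_functor_def additive_functor_def is_functor_def by blast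

lemma fun_cmp:
  assumes "exact_functor A B Fo Fm" "f \<in> cAr A" "g \<in> cAr A" "cCod A f = cDom A g"
  shows "Fm (cCmp A g f) = cCmp B (Fm g) (Fm f)"
  using assms unfolding exact_functor_def additive_functor_def is_functor_def by blast

lemma fun_confl:
  assumes "exact_functor A B Fo Fm" "(i, d) \<in> cConfl A"
  shows "(Fm i, Fm d) \<in> cConfl B"
  using assms unfolding exact_functor_def by blast

lemma fun_epi: "exact_functor A B Fo Fm \<Longrightarrow> adm_epi A d \<Longrightarrow> adm_epi B (Fm d)"
  unfolding adm_epi_def using fun_confl by metis

lemma fun_mono: "exact_functor A B Fo Fm \<Longrightarrow> adm_mono A d \<Longrightarrow> adm_mono B (Fm d)"
  unfolding adm_mono_def using fun_confl by metis

lemma ob_dom: "exact_category C \<Longrightarrow> f \<in> cAr C \<Longrightarrow> cDom C f \<in> cOb C \<and> cCod C f \<in> cOb C"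
  using ec_cat unfolding is_category_def by blast

theorem lemma0p8:
  fixes F :: "('o1, 'm1) excat" and G :: "('o2, 'm2) excat" and H :: "('o3, 'm3) excat"
    and \<gamma>o :: "'o1 \<Rightarrow> 'o2" and \<gamma>m :: "'m1 \<Rightarrow> 'm2"
    and \<eta>o :: "'o2 \<Rightarrow> 'o3" and \<eta>m :: "'m2 \<Rightarrow> 'm3"
  assumes "exact_category F" and "exact_category G" and "exact_category H"
    and "exact_functor F G \<gamma>o \<gamma>m" and "exact_functor G H \<eta>o \<eta>m"
  shows
    "(reflects_adm_epi F H (\<eta>m \<circ> \<gamma>m) \<longrightarrow> reflects_adm_epi F G \<gamma>m) \<and>
     (reflects_adm_mono F H (\<eta>m \<circ> \<gamma>m) \<longrightarrow> reflects_adm_mono F G \<gamma>m) \<and>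
     (reflects_exact F H (\<eta>m \<circ> \<gamma>m) \<longrightarrow> reflects_exact F G \<gamma>m) \<and>
     (cond_star' F H (\<eta>o \<circ> \<gamma>o) (\<eta>m \<circ> \<gamma>m) \<longrightarrow> cond_star' G H \<eta>o \<eta>m) \<and>
     (cond_star' F G \<gamma>o \<gamma>m \<and> cond_i' F H (\<eta>o \<circ> \<gamma>o) (\<eta>m \<circ> \<gamma>m)
        \<longrightarrow> cond_i' G H \<eta>o \<eta>m) \<and>
     (cond_star' F G \<gamma>o \<gamma>m \<and> cond_starstar' F H (\<eta>o \<circ> \<gamma>o) (\<eta>m \<circ> \<gamma>m)
        \<longrightarrow> cond_starstar' G H \<eta>o \<eta>m) \<and>
     (cond_star' F G \<gamma>o \<gamma>m \<and>
      cond_i' F H (\<eta>o \<circ> \<gamma>o) (\<eta>m \<circ> \<gamma>m) \<and> cond_ii' F H (\<eta>o \<circ> \<gamma>o) (\<eta>m \<circ> \<gamma>m) \<and>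
      cond_star' F H (\<eta>o \<circ> \<gamma>o) (\<eta>m \<circ> \<gamma>m) \<and> cond_starstar' F H (\<eta>o \<circ> \<gamma>o) (\<eta>m \<circ> \<gamma>m) \<and>
      reflects_adm_epi F H (\<eta>m \<circ> \<gamma>m)
        \<longrightarrow> cond_ii' G H \<eta>o \<eta>m)"
proof (intro conjI impI)
  note eF = assms(1) and eG = assms(2) and eH = assms(3) and g = assms(4) and e = assms(5)
  show "reflects_adm_epi F G \<gamma>m" if "reflects_adm_epi F H (\<eta>m \<circ> \<gamma>m)"
    using that fun_epi[OF e] unfolding reflects_adm_epi_def by auto
  show "reflects_adm_mono F G \<gamma>m" if "reflects_adm_mono F H (\<eta>m \<circ> \<gamma>m)"
    using that fun_mono[OF e] unfolding reflects_adm_mono_def by auto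
  show "reflects_exact F G \<gamma>m" if "reflects_exact F H (\<eta>m \<circ> \<gamma>m)"
    using that fun_confl[OF e] unfolding reflects_exact_def by auto
  show "cond_star' G H \<eta>o \<eta>m" if "cond_star' F H (\<eta>o \<circ> \<gamma>o) (\<eta>m \<circ> \<gamma>m)"
    using that fun_ob[OF g] unfolding cond_star'_def by fastforce
  show "cond_i' G H \<eta>o \<eta>m" if "cond_star' F G \<gamma>o \<gamma>m \<and> cond_i' F H (\<eta>o \<circ> \<gamma>o) (\<eta>m \<circ> \<gamma>m)"
      proof -
    from that have sg: "cond_star' F G \<gamma>o \<gamma>m" and ci: "cond_i' F H (\<eta>o \<circ> \<gamma>o) (\<eta>m \<circ> \<gamma>m)" by auto
    show ?thesis unfolding cond_i'_def
    proof (intro ballI allI impI)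
      fix X t assume X: "X \<in> cOb G" and t: "adm_epi H t \<and> cCod H t = \<eta>o X"
      obtain U e0 where U: "U \<in> cOb F" and e0: "adm_epi G e0" "cDom G e0 = \<gamma>o U" "cCod G e0 = X"
        using sg X unfolding cond_star'_def by blast
      have e0a: "e0 \<in> cAr G" using epi_ar[OF eG e0(1)] .
      have ee: "\<eta>m e0 \<in> cAr H \<and> cDom H (\<eta>m e0) = \<eta>o (\<gamma>o U) \<and> cCod H (\<eta>m e0) = \<eta>o X"
        using fun_ar[OF e e0a] e0 by simp
      have ta: "t \<in> cAr H" using epi_ar[OF eH] t by blast
      obtain d' f' where df: "adm_epi H d'" "d' \<in> cAr H" "cCod H d' = \<eta>o (\<gamma>o U)" "f' \<in> cAr H"
        "cDom H f' = cDom H d'" "cCod H f' = cDom H t" "cCmp H t f' = cCmp H (\<eta>m e0) d'"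
        using pb[OF eH, of t "\<eta>m e0"] t ee by auto
      obtain z u where zu: "adm_epi F z" "cCod F z = U" "u \<in> hom H ((\<eta>o \<circ> \<gamma>o) (cDom F z)) (cDom H d')"
        "cCmp H d' u = (\<eta>m \<circ> \<gamma>m) z"
        using ci U df(1,3) unfolding cond_i'_def by fastforce
      have za: "z \<in> cAr F" using epi_ar[OF eF zu(1)] .
      have gz: "\<gamma>m z \<in> cAr G \<and> cDom G (\<gamma>m z) = \<gamma>o (cDom F z) \<and> cCod G (\<gamma>m z) = \<gamma>o U"
        using fun_ar[OF g za] zu by simp
      have ua: "u \<in> cAr H" "cDom H u = \<eta>o (\<gamma>o (cDom F z))" "cCod H u = cDom H d'"
        using zu(3) by (auto simp: hom_def)
      have c1: "cCmp G e0 (\<gamma>m z) \<in> cAr G \<and> cDom G (cCmp G e0 (\<gamma>m z)) = \<gamma>o (cDom F z) \<and> cCod G (cCmp G e0 (\<gamma>m z)) = X"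
        using cmp_ar[OF eG, of "\<gamma>m z" e0] gz e0a e0 by simp
      have c2: "cCmp H f' u \<in> cAr H \<and> cDom H (cCmp H f' u) = \<eta>o (\<gamma>o (cDom F z)) \<and> cCod H (cCmp H f' u) = cDom H t"
        using cmp_ar[OF eH, of u f'] ua df by simp
      have ep: "adm_epi G (cCmp G e0 (\<gamma>m z))"
        using epi_cmp[OF eG fun_epi[OF g zu(1)] e0(1)] gz e0 by simp
      have "cCmp H t (cCmp H f' u) = cCmp H (cCmp H t f') u"
        using cmp_assoc[OF eH ua(1) df(4) ta] ua df by simp
      also have "\<dots> = cCmp H (\<eta>m e0) (cCmp H d' u)"
        using cmp_assoc[OF eH ua(1) df(2) ee[THEN conjunct1]] ua df ee df(7) by simp
      also have "\<dots> = \<eta>m (cCmp G e0 (\<gamma>m z))"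
        using zu(4) fun_cmp[OF e, of "\<gamma>m z" e0] gz e0a e0 by simp
      finally have eq: "cCmp H t (cCmp H f' u) = \<eta>m (cCmp G e0 (\<gamma>m z))" .
      show "\<exists>z u. adm_epi G z \<and> cCod G z = X \<and> u \<in> hom H (\<eta>o (cDom G z)) (cDom H t) \<and> cCmp H t u = \<eta>m z"
        apply (rule exI[of _ "cCmp G e0 (\<gamma>m z)"], rule exI[of _ "cCmp H f' u"])
        using ep c1 c2 eq by (simp add: hom_def)
    qed
  qed

  show "cond_starstar' G H \<eta>o \<eta>m" if "cond_star' F G \<gamma>o \<gamma>m \<and> cond_starstar' F H (\<eta>o \<circ> \<gamma>o) (\<eta>m \<circ> \<gamma>m)"
      proof -
    from that have sg: "cond_star' F G \<gamma>o \<gamma>m" and cs: "cond_starstar' F H (\<eta>o \<circ> \<gamma>o) (\<eta>m \<circ> \<gamma>m)" by auto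
    show ?thesis unfolding cond_starstar'_def
    proof (intro ballI allI impI)
      fix X g0 assume X: "X \<in> cOb G" and g0: "g0 \<in> cAr H" "cDom H g0 = \<eta>o X"
      obtain U e0 where U: "U \<in> cOb F" and e0: "adm_epi G e0" "cDom G e0 = \<gamma>o U" "cCod G e0 = X"
        using sg X unfolding cond_star'_def by blast
      have e0a: "e0 \<in> cAr G" using epi_ar[OF eG e0(1)] .
      have ee: "\<eta>m e0 \<in> cAr H \<and> cDom H (\<eta>m e0) = \<eta>o (\<gamma>o U) \<and> cCod H (\<eta>m e0) = \<eta>o X"
        using fun_ar[OF e e0a] e0 by simp
      have k: "cCmp H g0 (\<eta>m e0) \<in> cAr H \<and> cDom H (cCmp H g0 (\<eta>m e0)) = \<eta>o (\<gamma>o U) \<and> cCod H (cCmp H g0 (\<eta>m e0)) = cCod H g0"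
        using cmp_ar[OF eH, of "\<eta>m e0" g0] ee g0 by simp
      obtain p' h' e1 where ph: "adm_epi F p'" "cCod F p' = U" "h' \<in> cAr F" "cDom F h' = cDom F p'"
        "adm_epi H e1" "cDom H e1 = (\<eta>o \<circ> \<gamma>o) (cCod F h')" "cCod H e1 = cCod H g0"
        "cCmp H (cCmp H g0 (\<eta>m e0)) ((\<eta>m \<circ> \<gamma>m) p') = cCmp H e1 ((\<eta>m \<circ> \<gamma>m) h')"
      proof -
        have "\<exists>p h e. adm_epi F p \<and> cCod F p = U \<and> h \<in> cAr F \<and> cDom F h = cDom F p \<and>
                 adm_epi H e \<and> cDom H e = (\<eta>o \<circ> \<gamma>o) (cCod F h) \<and> cCod H e = cCod H g0 \<and>
                 cCmp H (cCmp H g0 (\<eta>m e0)) ((\<eta>m \<circ> \<gamma>m) p) = cCmp H e ((\<eta>m \<circ> \<gamma>m) h)"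
          using cs[unfolded cond_starstar'_def, rule_format, OF U, of "cCmp H g0 (\<eta>m e0)"] k by simp
        then show ?thesis using that by blast
      qed
      have pa: "p' \<in> cAr F" using epi_ar[OF eF ph(1)] .
      have gp: "\<gamma>m p' \<in> cAr G \<and> cDom G (\<gamma>m p') = \<gamma>o (cDom F p') \<and> cCod G (\<gamma>m p') = \<gamma>o U"
        using fun_ar[OF g pa] ph by simp
      have egp: "\<eta>m (\<gamma>m p') \<in> cAr H \<and> cDom H (\<eta>m (\<gamma>m p')) = \<eta>o (\<gamma>o (cDom F p')) \<and> cCod H (\<eta>m (\<gamma>m p')) = \<eta>o (\<gamma>o U)"
        using fun_ar[OF e, of "\<gamma>m p'"] gp by simp
      have gh: "\<gamma>m h' \<in> cAr G \<and> cDom G (\<gamma>m h') = \<gamma>o (cDom F p') \<and> cCod G (\<gamma>m h') = \<gamma>o (cCod F h')"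
        using fun_ar[OF g ph(3)] ph by simp
      have c1: "cCmp G e0 (\<gamma>m p') \<in> cAr G \<and> cDom G (cCmp G e0 (\<gamma>m p')) = \<gamma>o (cDom F p') \<and> cCod G (cCmp G e0 (\<gamma>m p')) = X"
        using cmp_ar[OF eG, of "\<gamma>m p'" e0] gp e0a e0 by simp
      have ep: "adm_epi G (cCmp G e0 (\<gamma>m p'))"
        using epi_cmp[OF eG fun_epi[OF g ph(1)] e0(1)] gp e0 by simp
      have "cCmp H g0 (\<eta>m (cCmp G e0 (\<gamma>m p'))) = cCmp H g0 (cCmp H (\<eta>m e0) (\<eta>m (\<gamma>m p')))"
        using fun_cmp[OF e, of "\<gamma>m p'" e0] gp e0a e0 by simp
      also have "\<dots> = cCmp H (cCmp H g0 (\<eta>m e0)) (\<eta>m (\<gamma>m p'))"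
        using cmp_assoc[OF eH, of "\<eta>m (\<gamma>m p')" "\<eta>m e0" g0] egp ee g0 by simp
      also have "\<dots> = cCmp H e1 (\<eta>m (\<gamma>m h'))" using ph(8) by simp
      finally have eq: "cCmp H g0 (\<eta>m (cCmp G e0 (\<gamma>m p'))) = cCmp H e1 (\<eta>m (\<gamma>m h'))" .
      show "\<exists>p h e. adm_epi G p \<and> cCod G p = X \<and> h \<in> cAr G \<and> cDom G h = cDom G p \<and>
                 adm_epi H e \<and> cDom H e = \<eta>o (cCod G h) \<and> cCod H e = cCod H g0 \<and>
                 cCmp H g0 (\<eta>m p) = cCmp H e (\<eta>m h)"
        apply (rule exI[of _ "cCmp G e0 (\<gamma>m p')"], rule exI[of _ "\<gamma>m h'"], rule exI[of _ e1])
        using ep c1 gh eq ph by simp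
    qed
  qed

  show "cond_ii' G H \<eta>o \<eta>m" if "cond_star' F G \<gamma>o \<gamma>m \<and>
      cond_i' F H (\<eta>o \<circ> \<gamma>o) (\<eta>m \<circ> \<gamma>m) \<and> cond_ii' F H (\<eta>o \<circ> \<gamma>o) (\<eta>m \<circ> \<gamma>m) \<and>
      cond_star' F H (\<eta>o \<circ> \<gamma>o) (\<eta>m \<circ> \<gamma>m) \<and> cond_starstar' F H (\<eta>o \<circ> \<gamma>o) (\<eta>m \<circ> \<gamma>m) \<and>
      reflects_adm_epi F H (\<eta>m \<circ> \<gamma>m)"
      proof -
    from that have sg: "cond_star' F G \<gamma>o \<gamma>m" and ci: "cond_i' F H (\<eta>o \<circ> \<gamma>o) (\<eta>m \<circ> \<gamma>m)"
      and cii: "cond_ii' F H (\<eta>o \<circ> \<gamma>o) (\<eta>m \<circ> \<gamma>m)" by auto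
    show ?thesis unfolding cond_ii'_def
    proof (intro ballI)
      fix X Y g0 assume X: "X \<in> cOb G" and Y: "Y \<in> cOb G" and g0h: "g0 \<in> hom H (\<eta>o X) (\<eta>o Y)"
      have g0: "g0 \<in> cAr H" "cDom H g0 = \<eta>o X" "cCod H g0 = \<eta>o Y" using g0h by (auto simp: hom_def)
      obtain U e1 where U: "U \<in> cOb F" and e1: "adm_epi G e1" "cDom G e1 = \<gamma>o U" "cCod G e1 = X"
        using sg X unfolding cond_star'_def by blast
      obtain V e2 where V: "V \<in> cOb F" and e2: "adm_epi G e2" "cDom G e2 = \<gamma>o V" "cCod G e2 = Y"
        using sg Y unfolding cond_star'_def by blast
      have e1a: "e1 \<in> cAr G" using epi_ar[OF eG e1(1)] .
      have e2a: "e2 \<in> cAr G" using epi_ar[OF eG e2(1)] .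
      have ee1: "\<eta>m e1 \<in> cAr H \<and> cDom H (\<eta>m e1) = \<eta>o (\<gamma>o U) \<and> cCod H (\<eta>m e1) = \<eta>o X"
        using fun_ar[OF e e1a] e1 by simp
      have ee2: "\<eta>m e2 \<in> cAr H \<and> cDom H (\<eta>m e2) = \<eta>o (\<gamma>o V) \<and> cCod H (\<eta>m e2) = \<eta>o Y"
        using fun_ar[OF e e2a] e2 by simp
      have ep2: "adm_epi H (\<eta>m e2)" using fun_epi[OF e e2(1)] .
      define k where "k = cCmp H g0 (\<eta>m e1)"
      have k: "k \<in> cAr H \<and> cDom H k = \<eta>o (\<gamma>o U) \<and> cCod H k = \<eta>o Y"
        unfolding k_def using cmp_ar[OF eH, of "\<eta>m e1" g0] ee1 g0 by simp
      obtain d' f' where df: "adm_epi H d'" "d' \<in> cAr H" "cCod H d' = \<eta>o (\<gamma>o U)" "f' \<in> cAr H"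
        "cDom H f' = cDom H d'" "cCod H f' = \<eta>o (\<gamma>o V)" "cCmp H (\<eta>m e2) f' = cCmp H k d'"
        using pb[OF eH ep2, of k] k ee2 by auto
      have "\<exists>z u. adm_epi F z \<and> cCod F z = U \<and> u \<in> hom H ((\<eta>o \<circ> \<gamma>o) (cDom F z)) (cDom H d') \<and>
               cCmp H d' u = (\<eta>m \<circ> \<gamma>m) z"
        using ci[unfolded cond_i'_def, rule_format, OF U, of d'] df by simp
      then obtain z u where zu: "adm_epi F z" "cCod F z = U" "u \<in> hom H ((\<eta>o \<circ> \<gamma>o) (cDom F z)) (cDom H d')"
        "cCmp H d' u = (\<eta>m \<circ> \<gamma>m) z" by blast
      have za: "z \<in> cAr F" using epi_ar[OF eF zu(1)] .
      have dz: "cDom F z \<in> cOb F" using ob_dom[OF eF za] by simp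
      have ua: "u \<in> cAr H" "cDom H u = \<eta>o (\<gamma>o (cDom F z))" "cCod H u = cDom H d'"
        using zu(3) by (auto simp: hom_def)
      define w where "w = cCmp H f' u"
      have w: "w \<in> cAr H \<and> cDom H w = \<eta>o (\<gamma>o (cDom F z)) \<and> cCod H w = \<eta>o (\<gamma>o V)"
        unfolding w_def using cmp_ar[OF eH, of u f'] ua df by simp
      have "\<exists>p h. adm_epi F p \<and> cCod F p = cDom F z \<and> h \<in> hom F (cDom F p) V \<and>
               cCmp H w ((\<eta>m \<circ> \<gamma>m) p) = (\<eta>m \<circ> \<gamma>m) h"
        using cii[unfolded cond_ii'_def, rule_format, OF dz V, of w] w by (simp add: hom_def)
      then obtain p h where ph: "adm_epi F p" "cCod F p = cDom F z" "h \<in> hom F (cDom F p) V"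
        "cCmp H w ((\<eta>m \<circ> \<gamma>m) p) = (\<eta>m \<circ> \<gamma>m) h" by blast
      have pa: "p \<in> cAr F" using epi_ar[OF eF ph(1)] .
      have ha: "h \<in> cAr F" "cDom F h = cDom F p" "cCod F h = V" using ph(3) by (auto simp: hom_def)
      have gz: "\<gamma>m z \<in> cAr G \<and> cDom G (\<gamma>m z) = \<gamma>o (cDom F z) \<and> cCod G (\<gamma>m z) = \<gamma>o U"
        using fun_ar[OF g za] zu by simp
      have gp: "\<gamma>m p \<in> cAr G \<and> cDom G (\<gamma>m p) = \<gamma>o (cDom F p) \<and> cCod G (\<gamma>m p) = \<gamma>o (cDom F z)"
        using fun_ar[OF g pa] ph by simp
      have gh: "\<gamma>m h \<in> cAr G \<and> cDom G (\<gamma>m h) = \<gamma>o (cDom F p) \<and> cCod G (\<gamma>m h) = \<gamma>o V"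
        using fun_ar[OF g ha(1)] ha by simp
      have Z: "\<eta>m (\<gamma>m z) \<in> cAr H \<and> cDom H (\<eta>m (\<gamma>m z)) = \<eta>o (\<gamma>o (cDom F z)) \<and> cCod H (\<eta>m (\<gamma>m z)) = \<eta>o (\<gamma>o U)"
        using fun_ar[OF e, of "\<gamma>m z"] gz by simp
      have P: "\<eta>m (\<gamma>m p) \<in> cAr H \<and> cDom H (\<eta>m (\<gamma>m p)) = \<eta>o (\<gamma>o (cDom F p)) \<and> cCod H (\<eta>m (\<gamma>m p)) = \<eta>o (\<gamma>o (cDom F z))"
        using fun_ar[OF e, of "\<gamma>m p"] gp by simp
      define q where "q = cCmp G (\<gamma>m z) (\<gamma>m p)"
      have q: "q \<in> cAr G \<and> cDom G q = \<gamma>o (cDom F p) \<and> cCod G q = \<gamma>o U"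
        unfolding q_def using cmp_ar[OF eG, of "\<gamma>m p" "\<gamma>m z"] gz gp by simp
      have qe: "adm_epi G q" unfolding q_def
        using epi_cmp[OF eG fun_epi[OF g ph(1)] fun_epi[OF g zu(1)]] gz gp by simp
      define pp where "pp = cCmp G e1 q"
      have pp: "pp \<in> cAr G \<and> cDom G pp = \<gamma>o (cDom F p) \<and> cCod G pp = X"
        unfolding pp_def using cmp_ar[OF eG, of q e1] q e1a e1 by simp
      have ppe: "adm_epi G pp" unfolding pp_def using epi_cmp[OF eG qe e1(1)] q e1 by simp
      define hh where "hh = cCmp G e2 (\<gamma>m h)"
      have hh: "hh \<in> cAr G \<and> cDom G hh = \<gamma>o (cDom F p) \<and> cCod G hh = Y"
        unfolding hh_def using cmp_ar[OF eG, of "\<gamma>m h" e2] gh e2a e2 by simp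
      define ZP where "ZP = cCmp H (\<eta>m (\<gamma>m z)) (\<eta>m (\<gamma>m p))"
      have ZPq: "\<eta>m q = ZP" unfolding q_def ZP_def using fun_cmp[OF e, of "\<gamma>m p" "\<gamma>m z"] gz gp by simp
      have ZP: "ZP \<in> cAr H \<and> cDom H ZP = \<eta>o (\<gamma>o (cDom F p)) \<and> cCod H ZP = \<eta>o (\<gamma>o U)"
        unfolding ZP_def using cmp_ar[OF eH, of "\<eta>m (\<gamma>m p)" "\<eta>m (\<gamma>m z)"] Z P by simp
      define uP where "uP = cCmp H u (\<eta>m (\<gamma>m p))"
      have uP: "uP \<in> cAr H \<and> cDom H uP = \<eta>o (\<gamma>o (cDom F p)) \<and> cCod H uP = cDom H d'"
        unfolding uP_def using cmp_ar[OF eH, of "\<eta>m (\<gamma>m p)" u] ua P ph(2) by simp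
      have "cCmp H g0 (\<eta>m pp) = cCmp H g0 (cCmp H (\<eta>m e1) ZP)"
        unfolding pp_def using fun_cmp[OF e, of q e1] q e1a e1 ZPq by simp
      also have "\<dots> = cCmp H k ZP"
        unfolding k_def using cmp_assoc[OF eH, of ZP "\<eta>m e1" g0] ZP ee1 g0 by simp
      also have "ZP = cCmp H (cCmp H d' u) (\<eta>m (\<gamma>m p))" unfolding ZP_def using zu(4) by simp
      also have "\<dots> = cCmp H d' uP"
        unfolding uP_def using cmp_assoc[OF eH, of "\<eta>m (\<gamma>m p)" u d'] P ua df ph(2) by simp
      also have "cCmp H k (cCmp H d' uP) = cCmp H (cCmp H k d') uP"
        using cmp_assoc[OF eH, of uP d' k] uP df k by simp
      also have "\<dots> = cCmp H (cCmp H (\<eta>m e2) f') uP" using df(7) by simp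
      also have "\<dots> = cCmp H (\<eta>m e2) (cCmp H f' uP)"
        using cmp_assoc[OF eH, of uP f' "\<eta>m e2"] uP df ee2 by simp
      also have "cCmp H f' uP = cCmp H w (\<eta>m (\<gamma>m p))"
        unfolding uP_def w_def using cmp_assoc[OF eH, of "\<eta>m (\<gamma>m p)" u f'] P ua df ph(2) by simp
      also have "\<dots> = \<eta>m (\<gamma>m h)" using ph(4) by simp
      also have "cCmp H (\<eta>m e2) (\<eta>m (\<gamma>m h)) = \<eta>m hh"
        unfolding hh_def using fun_cmp[OF e, of "\<gamma>m h" e2] gh e2a e2 by simp
      finally have eq: "cCmp H g0 (\<eta>m pp) = \<eta>m hh" .
      show "\<exists>p h. adm_epi G p \<and> cCod G p = X \<and> h \<in> hom G (cDom G p) Y \<and> cCmp H g0 (\<eta>m p) = \<eta>m h"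
        apply (rule exI[of _ pp], rule exI[of _ hh])
        using ppe pp hh eq by (simp add: hom_def)
    qed
  qed

qed

end
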